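(* Let $\Gamma$ be a semigroup with identity $e$, $V$ a finite-dimensional complex vector space, and $\rho:\Gamma\to\mathrm{End}(V)$ a reducible endomorphism action with $\rho(e)=\mathrm{Id}$ and generalized weights $\lambda_1,\dots,\lambda_k$. Then $\rho$ is expansive if and only if for each $i=1,\dots,k$ the image $\lambda_i(\Gamma)$ is an unbounded subset of $\mathbb C$.
   Context: A character of $\Gamma$ is a semigroup homomorphism $\lambda:\Gamma\to(\mathbb C,\cdot)$. An action $\rho:\Gamma\to\mathrm{End}(V)$ is reducible if there are characters $\lambda_1,\dots,\lambda_k$ and nontrivial $\rho(\Gamma)$-invariant subspaces $V_1,\dots,V_k$ with $V=V_1\oplus\cdots\oplus V_k$ such that for each $i$ there is a basis of $V_i$ with respect to which $\rho(\gamma)|_{V_i}-\lambda_i(\gamma)I$ is strictly upper triangular for all $\gamma\in\Gamma$; the $\lambda_i$ are the generalized weights. The action is expansive (on $V$ as an additive topological group) if there is a neighborhood $U$ of $0$ with $\bigcap_{\gamma}\rho(\gamma)^{-1}(U)=\{0\}$. *)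

theory Defs
  imports "HOL-Analysis.Analysis"
begin

text \<open>V = complex^'n (finite-dimensional complex vector space, dimension CARD('n));
  End(V) is represented by complex n x n matrices acting by (*v).
  Gamma is a semigroup with identity, i.e. a type of class monoid_mult (identity 1).\<close>

definition is_character :: "('g::monoid_mult \<Rightarrow> complex) \<Rightarrow> bool" where
  "is_character lam \<longleftrightarrow> (\<forall>g h. lam (g * h) = lam g * lam h)"

definition is_action :: "('g::monoid_mult \<Rightarrow> complex^'n^'n) \<Rightarrow> bool" where
  "is_action \<rho> \<longleftrightarrow> (\<forall>g h. \<rho> (g * h) = \<rho> g ** \<rho> h)"

text \<open>Reducible action with generalized weights lams = [lambda_1,...,lambda_k]:
  there are nontrivial invariant complex subspaces V_1..V_k with V their direct sum,
  and for each i a basis b_0..b_(m-1) of V_i w.r.t. which rho(g)|V_i - lambda_i(g) I is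
  strictly upper triangular, i.e. rho(g) b_j - lambda_i(g) b_j lies in span{b_0..b_(j-1)}.\<close>

definition reducible_with_weights ::
  "('g::monoid_mult \<Rightarrow> complex^'n^'n) \<Rightarrow> ('g \<Rightarrow> complex) list \<Rightarrow> bool" where
  "reducible_with_weights \<rho> lams \<longleftrightarrow>
     (\<exists>Vs :: (complex^'n) set list.
        length Vs = length lams \<and>
        (\<forall>i < length lams.
           is_character (lams ! i) \<and>
           vec.subspace (Vs ! i) \<and> Vs ! i \<noteq> {0} \<and>
           (\<forall>g. \<forall>v \<in> Vs ! i. \<rho> g *v v \<in> Vs ! i) \<and>
           (\<exists>(m::nat) (b :: nat \<Rightarrow> complex^'n).
              inj_on b {..<m} \<and> vec.independent (b ` {..<m}) \<and>
              vec.span (b ` {..<m}) = Vs ! i \<and>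
              (\<forall>g. \<forall>j < m. \<rho> g *v b j - (lams ! i) g *s b j \<in> vec.span (b ` {..<j})))) \<and>
        (\<forall>v :: complex^'n. \<exists>!f :: nat \<Rightarrow> complex^'n.
           (\<forall>i < length lams. f i \<in> Vs ! i) \<and> (\<forall>i \<ge> length lams. f i = 0) \<and>
           v = (\<Sum>i < length lams. f i)))"

definition expansive :: "('g \<Rightarrow> complex^'n^'n) \<Rightarrow> bool" where
  "expansive \<rho> \<longleftrightarrow>
     (\<exists>U :: (complex^'n) set. 0 \<in> interior U \<and>
        (\<Inter>g. (\<lambda>v. \<rho> g *v v) -` U) = {0})"

end

theory Submission
  imports Defs
begin

lemma norm_smult_c: "norm (c *s (x::complex^'n)) = norm c * norm x"
  by (simp add: norm_vec_def L2_set_right_distrib norm_mult)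

lemma scaleR_smult_c: "r *\<^sub>R (x::complex^'n) = (complex_of_real r :: complex) *s x"
proof (rule iffD2[OF vec_eq_iff], rule allI)
  fix i show "(r *\<^sub>R x) $ i = ((complex_of_real r :: complex) *s x) $ i"
    by (subst vector_scaleR_component) (simp add: scaleR_conv_of_real)
qed

lemma vec_subspace_real: "vec.subspace (S::(complex^'n) set) \<Longrightarrow> subspace S"
  unfolding subspace_def vec.subspace_def by (simp add: scaleR_smult_c)

lemma closed_vec_span: "closed (vec.span (S::(complex^'n) set))"
  by (rule closed_subspace, rule vec_subspace_real, rule vec.subspace_span)

lemma flag_invariant:
  fixes \<rho> :: "'g \<Rightarrow> complex^'n^'n" and b :: "nat \<Rightarrow> complex^'n"
  assumes tri: "\<forall>g. \<forall>j < m. \<rho> g *v b j - lam g *s b j \<in> vec.span (b ` {..<j})"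
    and k: "k \<le> m" and x: "x \<in> vec.span (b ` {..<k})"
  shows "\<rho> g *v x \<in> vec.span (b ` {..<k})"
proof -
  have "x \<in> ((*v) (\<rho> g)) -` vec.span (b ` {..<k})"
  proof (rule vec.span_induct[OF x])
    show "vec.subspace {x. x \<in> (*v) (\<rho> g) -` vec.span (b ` {..<k})}"
      using vec.subspace_vimage[OF vec.subspace_span, of "\<rho> g" "b ` {..<k}"]
      by (simp add: vimage_def)
  next
    fix y assume "y \<in> b ` {..<k}"
    then obtain l where l: "l < k" "y = b l" by auto
    have "\<rho> g *v b l - lam g *s b l \<in> vec.span (b ` {..<l})" using tri l k by auto
    also have "\<dots> \<subseteq> vec.span (b ` {..<k})" using l by (intro vec.span_mono) auto
    finally have 1: "\<rho> g *v b l - lam g *s b l \<in> vec.span (b ` {..<k})" .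
    have 2: "lam g *s b l \<in> vec.span (b ` {..<k})"
      using l by (intro vec.span_scale vec.span_base) auto
    have "\<rho> g *v b l = (\<rho> g *v b l - lam g *s b l) + lam g *s b l" by simp
    also have "\<dots> \<in> vec.span (b ` {..<k})" using 1 2 by (rule vec.span_add)
    finally show "y \<in> (*v) (\<rho> g) -` vec.span (b ` {..<k})" using l by simp
  qed
  then show ?thesis by simp
qed

lemma block_unbounded:
  fixes \<rho> :: "'g \<Rightarrow> complex^'n^'n" and b :: "nat \<Rightarrow> complex^'n"
  assumes inj: "inj_on b {..<m}" and ind: "vec.independent (b ` {..<m})"
    and tri: "\<forall>g. \<forall>j < m. \<rho> g *v b j - lam g *s b j \<in> vec.span (b ` {..<j})"
    and v: "v \<in> vec.span (b ` {..<m})" and v0: "v \<noteq> 0"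
    and ub: "\<not> bounded (range lam)"
  shows "\<not> bounded (range (\<lambda>g. \<rho> g *v v))"
proof
  assume bd: "bounded (range (\<lambda>g. \<rho> g *v v))"
  define j where "j = (LEAST j. v \<in> vec.span (b ` {..<j}))"
  have jv: "v \<in> vec.span (b ` {..<j})" unfolding j_def by (rule LeastI[of _ m], rule v)
  have jm: "j \<le> m" unfolding j_def by (rule Least_le, rule v)
  have "j \<noteq> 0"
  proof
    assume "j = 0" with jv v0 show False by simp
  qed
  then obtain j' where j': "j = Suc j'" by (cases j) auto
  have nj': "v \<notin> vec.span (b ` {..<j'})"
    using not_less_Least[of j' "\<lambda>j. v \<in> vec.span (b ` {..<j})"] j' j_def by auto
  have "b ` {..<j} = insert (b j') (b ` {..<j'})" using j' lessThan_Suc by auto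
  with jv have "\<exists>c. v - c *s b j' \<in> vec.span (b ` {..<j'})"
    using vec.span_breakdown_eq[of v "b j'" "b ` {..<j'}"] by simp
  then obtain c where c: "v - c *s b j' \<in> vec.span (b ` {..<j'})" by blast
  define S where "S = vec.span (b ` {..<j'})"
  define w where "w = v - c *s b j'"
  have wS: "w \<in> S" using c by (simp add: w_def S_def)
  have c0: "c \<noteq> 0" using c nj' by auto
  have j'm: "j' < m" using jm j' by simp
  have bS: "b j' \<notin> S"
  proof
    assume "b j' \<in> S"
    moreover have "b ` {..<j'} \<subseteq> b ` {..<m} - {b j'}"
      using inj j'm by (auto simp: inj_on_def)
    ultimately have "b j' \<in> vec.span (b ` {..<m} - {b j'})"
      unfolding S_def using vec.span_mono by blast
    then have "vec.dependent (b ` {..<m})" unfolding vec.dependent_def using j'm by blast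
    then show False using ind by simp
  qed
  define \<delta> where "\<delta> = infdist (b j') S"
  have S0: "0 \<in> S" unfolding S_def by (rule vec.span_zero)
  have d0: "\<delta> > 0"
    using in_closed_iff_infdist_zero[of S "b j'"] closed_vec_span[of "b ` {..<j'}"] S0 bS
      infdist_nonneg[of "b j'" S] unfolding \<delta>_def S_def by fastforce
  have dle: "\<delta> \<le> norm (b j' + s)" if "s \<in> S" for s
  proof -
    have "-s \<in> S" using that unfolding S_def by (rule vec.span_neg)
    then have "\<delta> \<le> dist (b j') (-s)" unfolding \<delta>_def by (rule infdist_le)
    then show ?thesis by (simp add: dist_norm)
  qed
  obtain B where B: "\<forall>g. norm (\<rho> g *v v) \<le> B" using bd by (auto simp: bounded_iff)
  have "\<forall>g. norm (lam g) \<le> B / (norm c * \<delta>)"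
  proof
    fix g
    define u where "u = c *s (\<rho> g *v b j' - lam g *s b j') + \<rho> g *v w"
    have uS: "u \<in> S" unfolding u_def S_def
    proof (rule vec.span_add)
      show "c *s (\<rho> g *v b j' - lam g *s b j') \<in> vec.span (b ` {..<j'})"
        using tri j'm by (intro vec.span_scale) auto
      show "\<rho> g *v w \<in> vec.span (b ` {..<j'})"
        using flag_invariant[OF tri, of j' w g] j'm wS S_def by simp
    qed
    have eq: "\<rho> g *v v = (c * lam g) *s b j' + u"
    proof -
      have "v = c *s b j' + w" by (simp add: w_def)
      then have "\<rho> g *v v = \<rho> g *v (c *s b j') + \<rho> g *v w"
        by (simp add: matrix_vector_right_distrib)
      also have "\<rho> g *v (c *s b j') = c *s (\<rho> g *v b j')"
        using vec.linear_scale[OF matrix_vector_mul_linear_gen] by blast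
      finally show ?thesis unfolding u_def
        by (simp add: vector_ssub_ldistrib vector_smult_assoc algebra_simps)
    qed
    show "norm (lam g) \<le> B / (norm c * \<delta>)"
    proof (cases "lam g = 0")
      case True
      have "0 \<le> B" using B[rule_format, of g] norm_ge_zero[of "\<rho> g *v v"] by linarith
      then show ?thesis using True d0 c0 by simp
    next
      case False
      define t where "t = c * lam g"
      have t0: "t \<noteq> 0" using False c0 by (simp add: t_def)
      have "(inverse t) *s u \<in> S" using uS unfolding S_def by (rule vec.span_scale)
      then have "\<delta> \<le> norm (b j' + (inverse t) *s u)" by (rule dle)
      have tu: "t *s (inverse t *s u) = u" using t0 by (simp add: vector_smult_assoc)
      have "t *s (b j' + (inverse t) *s u) = t *s b j' + u"
        by (simp only: vector_add_ldistrib tu)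
      moreover have "\<rho> g *v v = t *s b j' + u" using eq by (simp add: t_def)
      ultimately have "t *s (b j' + (inverse t) *s u) = \<rho> g *v v" by simp
      moreover note \<open>\<delta> \<le> norm (b j' + (inverse t) *s u)\<close>
      ultimately have "norm t * \<delta> \<le> norm (\<rho> g *v v)"
        by (metis norm_smult_c mult_left_mono norm_ge_zero)
      then have "norm c * \<delta> * norm (lam g) \<le> B" using B[rule_format, of g]
        by (simp add: t_def norm_mult algebra_simps)
      then show ?thesis using d0 c0 by (simp add: field_simps)
    qed
  qed
  then have "bounded (range lam)" by (auto simp: bounded_iff)
  then show False using ub by simp
qed

theorem proposition2p3:
  fixes \<rho> :: "'g::monoid_mult \<Rightarrow> complex^'n^'n"
    and lams :: "('g \<Rightarrow> complex) list"
  assumes "is_action \<rho>"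
    and "\<rho> 1 = mat 1"
    and "reducible_with_weights \<rho> lams"
  shows "expansive \<rho> \<longleftrightarrow> (\<forall>i < length lams. \<not> bounded (range (lams ! i)))"
proof -
  from assms(3) obtain Vs :: "(complex^'n) set list" where
    len: "length Vs = length lams" and
    blk: "\<forall>i < length lams.
           is_character (lams ! i) \<and>
           vec.subspace (Vs ! i) \<and> Vs ! i \<noteq> {0} \<and>
           (\<forall>g. \<forall>v \<in> Vs ! i. \<rho> g *v v \<in> Vs ! i) \<and>
           (\<exists>(m::nat) (b :: nat \<Rightarrow> complex^'n).
              inj_on b {..<m} \<and> vec.independent (b ` {..<m}) \<and>
              vec.span (b ` {..<m}) = Vs ! i \<and>
              (\<forall>g. \<forall>j < m. \<rho> g *v b j - (lams ! i) g *s b j \<in> vec.span (b ` {..<j})))" and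
    uq: "\<forall>v :: complex^'n. \<exists>!f :: nat \<Rightarrow> complex^'n.
           (\<forall>i < length lams. f i \<in> Vs ! i) \<and> (\<forall>i \<ge> length lams. f i = 0) \<and>
           v = (\<Sum>i < length lams. f i)"
    using assms(3) unfolding reducible_with_weights_def by (elim exE conjE) (rule that)
  define n where "n = length lams"
  define C where "C v f \<longleftrightarrow> (\<forall>i < n. f i \<in> Vs ! i) \<and> (\<forall>i \<ge> n. f i = 0) \<and>
           v = (\<Sum>i < n. f i)" for v :: "complex^'n" and f
  define Q where "Q v = (THE f. C v f)" for v
  have bsub: "vec.subspace (Vs ! i)" if "i < n" for i
    using blk[rule_format, of i] that unfolding n_def by simp
  have bnz: "Vs ! i \<noteq> {0}" if "i < n" for i
    using blk[rule_format, of i] that unfolding n_def by simp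
  have binv: "\<rho> g *v v \<in> Vs ! i" if "i < n" "v \<in> Vs ! i" for i g v
    using blk[rule_format, of i] that unfolding n_def by simp
  have bbas: "\<exists>(m::nat) (b :: nat \<Rightarrow> complex^'n).
              inj_on b {..<m} \<and> vec.independent (b ` {..<m}) \<and>
              vec.span (b ` {..<m}) = Vs ! i \<and>
              (\<forall>g. \<forall>j < m. \<rho> g *v b j - (lams ! i) g *s b j \<in> vec.span (b ` {..<j}))"
    if "i < n" for i
    using blk[rule_format, of i] that unfolding n_def by simp
  have uq': "\<exists>!f. C v f" for v
    unfolding C_def n_def by (rule uq[rule_format])
  have CQ: "C v (Q v)" for v unfolding Q_def using uq' by (rule theI')
  have QU: "Q v = f" if "C v f" for v f unfolding Q_def by (rule the1_equality[of "C v" f, OF uq'[of v] that])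
  have subR: "subspace (Vs ! i)" if "i < n" for i
    using bsub[OF that] by (rule vec_subspace_real)
  have lin: "linear (\<lambda>v. Q v i)" for i
  proof (rule linearI)
    fix x y
    have "C (x + y) (\<lambda>k. Q x k + Q y k)"
      using CQ[of x] CQ[of y] subR unfolding C_def by (auto simp: sum.distrib intro: subspace_add)
    then have "Q (x + y) = (\<lambda>k. Q x k + Q y k)" by (rule QU)
    then show "Q (x + y) i = Q x i + Q y i" by simp
  next
    fix r x
    have sx: "r *\<^sub>R x = (\<Sum>k<n. r *\<^sub>R Q x k)"
      using CQ[of x] unfolding C_def by (metis scaleR_sum_right)
    have "C (r *\<^sub>R x) (\<lambda>k. r *\<^sub>R Q x k)"
      using CQ[of x] subR sx unfolding C_def by (auto simp: scaleR_sum_right intro: subspace_scale)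
    then have "Q (r *\<^sub>R x) = (\<lambda>k. r *\<^sub>R Q x k)" by (rule QU)
    then show "Q (r *\<^sub>R x) i = r *\<^sub>R Q x i" by simp
  qed
  have comm: "Q (\<rho> g *v v) i = \<rho> g *v Q v i" for g v i
  proof -
    have sv: "\<rho> g *v v = (\<Sum>k<n. \<rho> g *v Q v k)"
      using CQ[of v] unfolding C_def
      by (metis vec.linear_sum[OF matrix_vector_mul_linear_gen])
    have "C (\<rho> g *v v) (\<lambda>k. \<rho> g *v Q v k)"
      using CQ[of v] binv sv unfolding C_def
      by (simp add: vec.linear_sum[OF matrix_vector_mul_linear_gen])
    then have "Q (\<rho> g *v v) = (\<lambda>k. \<rho> g *v Q v k)" by (rule QU)
    then show ?thesis by simp
  qed
  show ?thesis
  proof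
    assume exp: "expansive \<rho>"
    show "\<forall>i < length lams. \<not> bounded (range (lams ! i))"
    proof (intro allI impI notI)
      fix i assume i: "i < length lams" and bd: "bounded (range (lams ! i))"
      obtain M where M: "M > 0" "\<forall>g. norm ((lams ! i) g) \<le> M"
        using bd by (auto simp: bounded_pos)
      obtain U where U: "0 \<in> interior U" "(\<Inter>g. (\<lambda>v. \<rho> g *v v) -` U) = {0}"
        using exp unfolding expansive_def by blast
      obtain r where r: "r > 0" "ball 0 r \<subseteq> U" using U(1) mem_interior by blast
      obtain m :: nat and b :: "nat \<Rightarrow> complex^'n" where mb: "inj_on b {..<m}" "vec.independent (b ` {..<m})"
        "vec.span (b ` {..<m}) = Vs ! i"
        "\<forall>g. \<forall>j < m. \<rho> g *v b j - (lams ! i) g *s b j \<in> vec.span (b ` {..<j})"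
      proof -
        have i': "i < n" using i n_def by simp
        show ?thesis using bbas[OF i'] that by blast
      qed
      have "m \<noteq> 0"
      proof
        assume "m = 0"
        then have "Vs ! i = {0}" using mb(3) by simp
        then show False using bnz[of i] i n_def by simp
      qed
      then have m0: "0 < m" by simp
      have eig: "\<rho> g *v b 0 = (lams ! i) g *s b 0" for g
      proof -
        have "\<rho> g *v b 0 - (lams ! i) g *s b 0 \<in> vec.span (b ` {..<0})"
          using mb(4) m0 by blast
        then show ?thesis by simp
      qed
      have b0: "b 0 \<noteq> 0"
        using mb(2) m0 vec.dependent_zero[of "b ` {..<m}"] by force
      define \<epsilon> where "\<epsilon> = r / (2 * M * norm (b 0))"
      have e0: "\<epsilon> > 0" using r M b0 by (simp add: \<epsilon>_def)
      define x where "x = \<epsilon> *\<^sub>R b 0"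
      have x0: "x \<noteq> 0" using e0 b0 by (simp add: x_def)
      have "x \<in> (\<Inter>g. (\<lambda>v. \<rho> g *v v) -` U)"
      proof (clarsimp)
        fix g
        have "\<rho> g *v x = \<epsilon> *\<^sub>R ((lams ! i) g *s b 0)"
          unfolding x_def using eig[of g] linear_scale[OF matrix_vector_mul_linear] by metis
        then have "norm (\<rho> g *v x) = \<epsilon> * (norm ((lams ! i) g) * norm (b 0))"
          using e0 by (simp add: norm_smult_c)
        also have "\<dots> \<le> \<epsilon> * (M * norm (b 0))"
          using M e0 by (intro mult_left_mono mult_right_mono) auto
        also have "\<dots> = r / 2" using M b0 by (simp add: \<epsilon>_def)
        also have "\<dots> < r" using r by simp
        finally show "\<rho> g *v x \<in> U" using r by auto
      qed
      then show False using U(2) x0 by simp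
    qed
  next
    assume ub: "\<forall>i < length lams. \<not> bounded (range (lams ! i))"
    show "expansive \<rho>" unfolding expansive_def
    proof (intro exI conjI)
      show "0 \<in> interior (ball (0::complex^'n) 1)" by simp
      show "(\<Inter>g. (\<lambda>v. \<rho> g *v v) -` ball 0 1) = {0}"
      proof (rule set_eqI, rule iffI)
        fix v assume "v \<in> (\<Inter>g. (\<lambda>v. \<rho> g *v v) -` ball 0 1)"
        then have vb: "\<forall>g. norm (\<rho> g *v v) < 1" by auto
        show "v \<in> {0}"
        proof (rule ccontr)
          assume "v \<notin> {0}"
          then have v0: "v \<noteq> 0" by simp
          have "\<exists>i < n. Q v i \<noteq> 0"
          proof (rule ccontr)
            assume "\<not> ?thesis"
            then have "(\<Sum>i < n. Q v i) = 0" by simp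
            then show False using CQ[of v] v0 unfolding C_def by simp
          qed
          then obtain i where i: "i < n" "Q v i \<noteq> 0" by blast
          obtain m :: nat and b :: "nat \<Rightarrow> complex^'n" where mb: "inj_on b {..<m}" "vec.independent (b ` {..<m})"
            "vec.span (b ` {..<m}) = Vs ! i"
            "\<forall>g. \<forall>j < m. \<rho> g *v b j - (lams ! i) g *s b j \<in> vec.span (b ` {..<j})"
            using bbas[OF i(1)] by blast
          have "Q v i \<in> vec.span (b ` {..<m})" using CQ[of v] i mb(3) unfolding C_def by simp
          then have nb: "\<not> bounded (range (\<lambda>g. \<rho> g *v Q v i))"
            using block_unbounded[OF mb(1,2,4)] i ub n_def by blast
          obtain K where Kp: "K > 0" and K: "\<forall>x. norm (Q x i) \<le> norm x * K"
            using bounded_linear.pos_bounded[OF lin[of i, unfolded linear_conv_bounded_linear]]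
            by blast
          have "norm (\<rho> g *v Q v i) \<le> K" for g
          proof -
            have "norm (\<rho> g *v Q v i) = norm (Q (\<rho> g *v v) i)" by (simp add: comm)
            also have "\<dots> \<le> norm (\<rho> g *v v) * K" using K by blast
            also have "\<dots> \<le> K"
              using vb[rule_format, of g] Kp
              by (intro mult_left_le_one_le) auto
            finally show ?thesis .
          qed
          then have "bounded (range (\<lambda>g. \<rho> g *v Q v i))" by (auto simp: bounded_iff)
          then show False using nb by simp
        qed
      next
        fix v assume "v \<in> {0::complex^'n}"
        then show "v \<in> (\<Inter>g. (\<lambda>v. \<rho> g *v v) -` ball 0 1)" by simp
      qed
    qed
  qed
qed

end
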